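(* Let $\mathcal{C}=(\mathcal{T},\mathcal{I},\mathcal{R})$ be an extraction context with thresholds \textit{minsupp} and \textit{minbond}. Then $\mathcal{RCPR}=\mathcal{CRCP}\cup\mathcal{MRCP}$, with each element $J$ recorded together with $\mathit{Supp}(\wedge J)$ and $\mathit{bond}(J)$, is an exact concise representation of the set $\mathcal{RCP}$ of rare correlated patterns.
   Context: An extraction context is a triple $\mathcal{C}=(\mathcal{T},\mathcal{I},\mathcal{R})$ with $\mathcal{T}$ a finite set of transactions, $\mathcal{I}$ a finite set of items and $\mathcal{R}\subseteq\mathcal{T}\times\mathcal{I}$. For a pattern $I\subseteq\mathcal{I}$: $\mathit{Supp}(\wedge I)=|\{t:\forall i\in I,(t,i)\in\mathcal{R}\}|$, $\mathit{Supp}(\vee I)=|\{t:\exists i\in I,(t,i)\in\mathcal{R}\}|$, and for nonempty $I$, $\mathit{bond}(I)=\mathit{Supp}(\wedge I)/\mathit{Supp}(\vee I)$ (with $\mathit{bond}(\emptyset)=+\infty$ by convention). $\mathcal{RCP}=\{I\subseteq\mathcal{I}:\mathit{Supp}(\wedge I)<\textit{minsupp},\ \mathit{bond}(I)\ge\textit{minbond}\}$. Closed rare correlated patterns: $\mathcal{CRCP}=\{I\in\mathcal{RCP}:\forall I_1\supsetneq I,\ \mathit{bond}(I)>\mathit{bond}(I_1)\}$. Minimal rare correlated patterns: $\mathcal{MRCP}=\{I\in\mathcal{RCP}:\forall I_1\subsetneq I,\ \mathit{bond}(I)<\mathit{bond}(I_1)\}$. A family $\mathcal{S}\subseteq\mathcal{RCP}$,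 with each $J\in\mathcal{S}$ recorded together with $\mathit{Supp}(\wedge J)$ and $\mathit{bond}(J)$, is an exact concise representation of $\mathcal{RCP}$ if, for every pattern $I\subseteq\mathcal{I}$, the recorded data $\{(J,\mathit{Supp}(\wedge J),\mathit{bond}(J)):J\in\mathcal{S}\}$ alone suffice to decide whether $I\in\mathcal{RCP}$ and, when $I\in\mathcal{RCP}$, to determine exactly $\mathit{Supp}(\wedge I)$ and $\mathit{bond}(I)$. *)

theory Defs
  imports "HOL-Library.Extended_Real"
begin

definition extraction_context :: "'t set \<Rightarrow> 'i set \<Rightarrow> ('t \<times> 'i) set \<Rightarrow> bool" where
  "extraction_context T Is R \<longleftrightarrow> finite T \<and> finite Is \<and> R \<subseteq> T \<times> Is"

definition supp_conj :: "'t set \<Rightarrow> ('t \<times> 'i) set \<Rightarrow> 'i set \<Rightarrow> nat" where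
  "supp_conj T R I = card {t \<in> T. \<forall>i \<in> I. (t, i) \<in> R}"

definition supp_disj :: "'t set \<Rightarrow> ('t \<times> 'i) set \<Rightarrow> 'i set \<Rightarrow> nat" where
  "supp_disj T R I = card {t \<in> T. \<exists>i \<in> I. (t, i) \<in> R}"

definition bond :: "'t set \<Rightarrow> ('t \<times> 'i) set \<Rightarrow> 'i set \<Rightarrow> ereal" where
  "bond T R I = (if I = {} then \<infinity>
     else ereal (real (supp_conj T R I) / real (supp_disj T R I)))"

definition RCP :: "'t set \<Rightarrow> 'i set \<Rightarrow> ('t \<times> 'i) set \<Rightarrow> real \<Rightarrow> real \<Rightarrow> 'i set set" where
  "RCP T Is R minsupp minbond =
     {I. I \<subseteq> Is \<and> real (supp_conj T R I) < minsupp \<and> bond T R I \<ge> ereal minbond}"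

definition CRCP :: "'t set \<Rightarrow> 'i set \<Rightarrow> ('t \<times> 'i) set \<Rightarrow> real \<Rightarrow> real \<Rightarrow> 'i set set" where
  "CRCP T Is R minsupp minbond =
     {I \<in> RCP T Is R minsupp minbond. \<forall>I1. I \<subset> I1 \<and> I1 \<subseteq> Is \<longrightarrow> bond T R I > bond T R I1}"

definition MRCP :: "'t set \<Rightarrow> 'i set \<Rightarrow> ('t \<times> 'i) set \<Rightarrow> real \<Rightarrow> real \<Rightarrow> 'i set set" where
  "MRCP T Is R minsupp minbond =
     {I \<in> RCP T Is R minsupp minbond. \<forall>I1. I1 \<subset> I \<longrightarrow> bond T R I < bond T R I1}"

text \<open>A selection S (a family of patterns chosen from each context) is an exact concise
representation of RCP if S is always contained in RCP and there is one decoding function,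
uniform over all extraction contexts, which from the recorded triples
(J, Supp(\<and>J), bond(J)), J \<in> S, and a pattern I \<subseteq> Is decides whether I \<in> RCP and,
if so, returns Supp(\<and>I) and bond(I).\<close>

definition recorded ::
  "'t set \<Rightarrow> ('t \<times> 'i) set \<Rightarrow> 'i set set \<Rightarrow> ('i set \<times> nat \<times> ereal) set" where
  "recorded T R S = (\<lambda>J. (J, supp_conj T R J, bond T R J)) ` S"

definition exact_concise_representation ::
  "real \<Rightarrow> real \<Rightarrow> ('t set \<Rightarrow> 'i set \<Rightarrow> ('t \<times> 'i) set \<Rightarrow> 'i set set) \<Rightarrow> bool" where
  "exact_concise_representation minsupp minbond S \<longleftrightarrow>
     (\<forall>T Is R. extraction_context T Is R \<longrightarrow> S T Is R \<subseteq> RCP T Is R minsupp minbond) \<and>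
     (\<exists>dec :: ('i set \<times> nat \<times> ereal) set \<Rightarrow> 'i set \<Rightarrow> (nat \<times> ereal) option.
        \<forall>T Is R. extraction_context T Is R \<longrightarrow>
          (\<forall>I. I \<subseteq> Is \<longrightarrow>
             dec (recorded T R (S T Is R)) I =
               (if I \<in> RCP T Is R minsupp minbond
                then Some (supp_conj T R I, bond T R I) else None)))"

end

theory Submission
  imports Defs
begin

lemma conj_le_disj:
  assumes "finite T" "I \<noteq> {}"
  shows "supp_conj T R I \<le> supp_disj T R I"
  unfolding supp_conj_def supp_disj_def
  using assms by (intro card_mono) auto

lemma conj_anti:
  assumes "finite T" "I \<subseteq> J"
  shows "supp_conj T R J \<le> supp_conj T R I"
  unfolding supp_conj_def using assms by (intro card_mono) auto

lemma disj_mono: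
  assumes "finite T" "I \<subseteq> J"
  shows "supp_disj T R I \<le> supp_disj T R J"
  unfolding supp_disj_def using assms by (intro card_mono) auto

lemma bond_anti:
  assumes "finite T" "I \<subseteq> J"
  shows "bond T R J \<le> bond T R I"
proof (cases "I = {}")
  case True then show ?thesis by (simp add: bond_def)
next
  case False
  then have J: "J \<noteq> {}" using assms by auto
  have c: "supp_conj T R J \<le> supp_conj T R I" by (rule conj_anti[OF assms(1,2)])
  have d: "supp_disj T R I \<le> supp_disj T R J" by (rule disj_mono[OF assms(1,2)])
  have cd: "supp_conj T R I \<le> supp_disj T R I" by (rule conj_le_disj[OF assms(1) False])
  show ?thesis
  proof (cases "supp_disj T R I = 0")
    case True
    then have "supp_conj T R J = 0" using c cd by linarith
    then show ?thesis using False J True by (simp add: bond_def)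
  next
    case f2: False
    have "real (supp_conj T R J) / real (supp_disj T R J)
        \<le> real (supp_conj T R I) / real (supp_disj T R I)"
      using c d f2 by (intro frac_le) (simp_all)
    then show ?thesis using False J by (simp add: bond_def)
  qed
qed

lemma eq_bond_conj:
  assumes "finite T" "I \<subseteq> J" "bond T R I = bond T R J"
  shows "supp_conj T R I = supp_conj T R J"
proof (cases "I = {}")
  case True
  then have "J = {}" using assms(3) by (auto simp: bond_def split: if_splits)
  then show ?thesis using True by simp
next
  case False
  then have J: "J \<noteq> {}" using assms by auto
  have c: "supp_conj T R J \<le> supp_conj T R I" by (rule conj_anti[OF assms(1,2)])
  have d: "supp_disj T R I \<le> supp_disj T R J" by (rule disj_mono[OF assms(1,2)])
  have cd: "supp_conj T R I \<le> supp_disj T R I" by (rule conj_le_disj[OF assms(1) False])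
  have eq: "real (supp_conj T R I) / real (supp_disj T R I)
        = real (supp_conj T R J) / real (supp_disj T R J)"
    using assms(3) False J by (simp add: bond_def)
  show ?thesis
  proof (cases "supp_conj T R I = 0")
    case True then show ?thesis using c by simp
  next
    case f2: False
    then have dI: "supp_disj T R I > 0" using cd by simp
    then have dJ: "supp_disj T R J > 0" using d by simp
    define r where "r = real (supp_conj T R I) / real (supp_disj T R I)"
    have r: "r > 0" using f2 dI unfolding r_def by simp
    have cI: "real (supp_conj T R I) = r * real (supp_disj T R I)" using dI unfolding r_def by simp
    have cJ: "real (supp_conj T R J) = r * real (supp_disj T R J)" using dJ eq unfolding r_def by simp
    have "real (supp_conj T R I) \<le> real (supp_conj T R J)"
      unfolding cI cJ using r d by (intro mult_left_mono) auto
    then show ?thesis using c by linarith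
  qed
qed

lemma closure_ex:
  assumes "finite Is" "finite T" "I \<subseteq> Is"
  shows "\<exists>J. I \<subseteq> J \<and> J \<subseteq> Is \<and> bond T R J = bond T R I \<and>
            (\<forall>I1. J \<subset> I1 \<and> I1 \<subseteq> Is \<longrightarrow> bond T R J > bond T R I1)"
proof -
  define F where "F = {J. I \<subseteq> J \<and> J \<subseteq> Is \<and> bond T R J = bond T R I}"
  have "F \<subseteq> Pow Is" unfolding F_def by blast
  then have fF: "finite F" using assms(1) finite_subset by blast
  have "I \<in> F" using assms(3) unfolding F_def by blast
  then have nF: "F \<noteq> {}" by blast
  have "\<exists>m\<in>F. \<forall>b\<in>F. m \<le> b \<longrightarrow> m = b"
    by (rule finite_has_maximal[OF fF nF])
  then obtain m where m1: "m \<in> F" and m2: "\<forall>b\<in>F. m \<le> b \<longrightarrow> m = b"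
    by blast
  have mI: "I \<subseteq> m" "m \<subseteq> Is" "bond T R m = bond T R I" using m1 unfolding F_def by auto
  have "bond T R m > bond T R I1" if "m \<subset> I1" "I1 \<subseteq> Is" for I1
  proof -
    have "bond T R I1 \<le> bond T R m" using bond_anti[OF assms(2)] that(1) by blast
    moreover have "bond T R I1 \<noteq> bond T R m"
    proof
      assume "bond T R I1 = bond T R m"
      then have "I1 \<in> F" using mI that unfolding F_def by auto
      then have "m = I1" using m2 that by blast
      then show False using that by blast
    qed
    ultimately show ?thesis by simp
  qed
  then show ?thesis using mI by blast
qed

lemma minimal_ex:
  assumes "finite I" "finite T"
  shows "\<exists>K. K \<subseteq> I \<and> bond T R K = bond T R I \<and>
            (\<forall>K1. K1 \<subset> K \<longrightarrow> bond T R K < bond T R K1)"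
proof -
  define F where "F = {K. K \<subseteq> I \<and> bond T R K = bond T R I}"
  have "F \<subseteq> Pow I" unfolding F_def by blast
  then have fF: "finite F" using assms(1) finite_subset by blast
  have "I \<in> F" unfolding F_def by blast
  then have nF: "F \<noteq> {}" by blast
  have "\<exists>m\<in>F. \<forall>b\<in>F. b \<le> m \<longrightarrow> m = b"
    by (rule finite_has_minimal[OF fF nF])
  then obtain m where m1: "m \<in> F" and m2: "\<forall>b\<in>F. b \<le> m \<longrightarrow> m = b"
    by blast
  have mI: "m \<subseteq> I" "bond T R m = bond T R I" using m1 unfolding F_def by auto
  have "bond T R m < bond T R K1" if "K1 \<subset> m" for K1
  proof -
    have "bond T R m \<le> bond T R K1" using bond_anti[OF assms(2)] that by blast
    moreover have "bond T R K1 \<noteq> bond T R m"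
    proof
      assume "bond T R K1 = bond T R m"
      then have "K1 \<in> F" using mI that unfolding F_def by auto
      then have "m = K1" using m2 that by blast
      then show False using that by blast
    qed
    ultimately show ?thesis by simp
  qed
  then show ?thesis using mI by blast
qed

lemma recorded_iff:
  "(J, s, b) \<in> recorded T R S \<longleftrightarrow> J \<in> S \<and> s = supp_conj T R J \<and> b = bond T R J"
  unfolding recorded_def by auto

definition decR :: "('i set \<times> nat \<times> ereal) set \<Rightarrow> 'i set \<Rightarrow> (nat \<times> ereal) option" where
  "decR Rec I = (if (\<exists>x\<in>Rec. fst x \<subseteq> I) \<and> (\<exists>x\<in>Rec. I \<subseteq> fst x)
     then Some (snd (SOME x. x \<in> Rec \<and> I \<subseteq> fst x \<and>
                 (\<forall>y\<in>Rec. I \<subseteq> fst y \<longrightarrow> snd (snd y) \<le> snd (snd x))))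
     else None)"

theorem mainTheorem4:
  fixes minsupp minbond :: real
  shows "exact_concise_representation minsupp minbond
           (\<lambda>(T :: 't set) (Is :: 'i set) R.
              CRCP T Is R minsupp minbond \<union> MRCP T Is R minsupp minbond)"
  unfolding exact_concise_representation_def
proof (intro conjI allI impI exI[of _ decR])
  fix T :: "'t set" and Is :: "'i set" and R
  assume "extraction_context T Is R"
  then show "(case T of T \<Rightarrow> \<lambda>Is R. CRCP T Is R minsupp minbond \<union> MRCP T Is R minsupp minbond) Is R
       \<subseteq> RCP T Is R minsupp minbond" by (auto simp: CRCP_def MRCP_def)
next
  fix T :: "'t set" and Is :: "'i set" and R and I
  assume ctx: "extraction_context T Is R" and IIs: "I \<subseteq> Is"
  have fT: "finite T" and fIs: "finite Is" using ctx by (auto simp: extraction_context_def)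
  define S where "S = CRCP T Is R minsupp minbond \<union> MRCP T Is R minsupp minbond"
  define Rec where "Rec = recorded T R S"
  have SR: "S \<subseteq> RCP T Is R minsupp minbond" by (auto simp: S_def CRCP_def MRCP_def)
  have "decR Rec I = (if I \<in> RCP T Is R minsupp minbond
                then Some (supp_conj T R I, bond T R I) else None)"
  proof (cases "I \<in> RCP T Is R minsupp minbond")
    case True
    have IR: "real (supp_conj T R I) < minsupp" "bond T R I \<ge> ereal minbond"
      using True by (auto simp: RCP_def)
    from closure_ex[OF fIs fT IIs] obtain J where Jall: "I \<subseteq> J \<and> J \<subseteq> Is \<and> bond T R J = bond T R I \<and>
       (\<forall>I1. J \<subset> I1 \<and> I1 \<subseteq> Is \<longrightarrow> bond T R J > bond T R I1)"
      by (rule exE)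
    note J = Jall[THEN conjunct1] Jall[THEN conjunct2, THEN conjunct1]
       Jall[THEN conjunct2, THEN conjunct2, THEN conjunct1]
       Jall[THEN conjunct2, THEN conjunct2, THEN conjunct2]
    have "supp_conj T R I = supp_conj T R J" using eq_bond_conj[OF fT J(1)] J(3) by simp
    then have "J \<in> RCP T Is R minsupp minbond" using IR J by (auto simp: RCP_def)
    then have JS: "J \<in> S" using J(4) by (auto simp: S_def CRCP_def)
    have fI: "finite I" using IIs fIs finite_subset by blast
    obtain K where K: "K \<subseteq> I" "bond T R K = bond T R I"
       "\<forall>K1. K1 \<subset> K \<longrightarrow> bond T R K < bond T R K1"
      using minimal_ex[OF fI fT] by blast
    have "supp_conj T R K = supp_conj T R I" using eq_bond_conj[OF fT K(1)] K(2) by simp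
    then have "K \<in> RCP T Is R minsupp minbond" using IR K IIs by (auto simp: RCP_def)
    then have KS: "K \<in> S" using K(3) by (auto simp: S_def MRCP_def)
    have JR: "(J, supp_conj T R J, bond T R J) \<in> Rec" "(K, supp_conj T R K, bond T R K) \<in> Rec"
      using JS KS by (auto simp: Rec_def recorded_iff)
    let ?P = "\<lambda>x. x \<in> Rec \<and> I \<subseteq> fst x \<and>
                 (\<forall>y\<in>Rec. I \<subseteq> fst y \<longrightarrow> snd (snd y) \<le> snd (snd x))"
    have "?P (J, supp_conj T R J, bond T R J)"
    proof -
      have "snd (snd y) \<le> bond T R J" if "y \<in> Rec" "I \<subseteq> fst y" for y
      proof -
        obtain J' s b where y: "y = (J', s, b)" by (cases y) auto
        have "b = bond T R J'" using that y by (auto simp: Rec_def recorded_iff)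
        then show ?thesis using y that J(3) bond_anti[OF fT] by auto
      qed
      then show ?thesis using JR J(1) by auto
    qed
    then have P: "?P (SOME x. ?P x)" by (rule someI)
    obtain J' s b where eqx: "(SOME x. ?P x) = (J', s, b)" by (cases "SOME x. ?P x") auto
    have J'S: "J' \<in> S" "s = supp_conj T R J'" "b = bond T R J'"
      using P eqx by (auto simp: Rec_def recorded_iff)
    have "bond T R J \<le> b" using P eqx JR J(1) by fastforce
    moreover have "b \<le> bond T R I" using J'S P eqx bond_anti[OF fT] by auto
    ultimately have bb: "b = bond T R I" using J(3) by auto
    have ss: "s = supp_conj T R I" using eq_bond_conj[OF fT, of I J'] P eqx bb J'S by auto
    have "(\<exists>x\<in>Rec. fst x \<subseteq> I) \<and> (\<exists>x\<in>Rec. I \<subseteq> fst x)"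
      using JR J(1) K(1) by force
    then show ?thesis using True eqx bb ss unfolding decR_def by simp
  next
    case False
    have "\<not> ((\<exists>x\<in>Rec. fst x \<subseteq> I) \<and> (\<exists>x\<in>Rec. I \<subseteq> fst x))"
    proof
      assume "(\<exists>x\<in>Rec. fst x \<subseteq> I) \<and> (\<exists>x\<in>Rec. I \<subseteq> fst x)"
      then obtain K J where K: "K \<in> S" "K \<subseteq> I" and J: "J \<in> S" "I \<subseteq> J"
        by (auto simp: Rec_def recorded_def)
      have "K \<in> RCP T Is R minsupp minbond" "J \<in> RCP T Is R minsupp minbond" using K J SR by auto
      moreover have "supp_conj T R I \<le> supp_conj T R K" using conj_anti[OF fT K(2)] .
      moreover have "bond T R J \<le> bond T R I" using bond_anti[OF fT J(2)] .
      ultimately have "I \<in> RCP T Is R minsupp minbond" using IIs by (auto simp: RCP_def)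
      then show False using False by simp
    qed
    then show ?thesis using False unfolding decR_def by simp
  qed
  then show "decR (recorded T R ((case T of T \<Rightarrow> \<lambda>Is R. CRCP T Is R minsupp minbond \<union> MRCP T Is R minsupp minbond) Is R)) I =
       (if I \<in> RCP T Is R minsupp minbond then Some (supp_conj T R I, bond T R I) else None)"
    by (simp add: Rec_def S_def)
qed

end
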